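(* Let $q$ be an odd prime power, $n$ a positive integer with $n\mid(q-1)$, $\lambda\in\mathbb{F}_q^{*}$ with multiplicative order dividing $\frac{q-1}{n}$, and let $\alpha_1,\dots,\alpha_n\in\mathbb{F}_q^{*}$ be the (pairwise distinct) roots of $x^n-\lambda$, i.e. $x^n-\lambda=\prod_{i=1}^n(x-\alpha_i)$, in some fixed order. Let $\ell\ge0$, $\boldsymbol\eta=(\eta_0,\dots,\eta_\ell)\in\mathbb{F}_q^{\ell+1}\setminus\{\boldsymbol0\}$, let $r$ be an integer with $0\le r\le\ell$, and let $k=\frac{n-\ell-r}{2}$ be an integer with $k\ge2$. Let $\boldsymbol v=(v_1,\dots,v_n)$ with $v_i\in\{-1,1\}$ for $k\le i\le n$ and $v_i\in\mathbb{F}_q\setminus\{-1,0,1\}$ for $1\le i\le k-1$. Suppose $$1+\sum_{t=r}^{\ell}\eta_t\,\Phi_{\ell+1+r-t}\neq0,\qquad\text{where }\Phi_i=(-1)^{n-1}P\,\Omega_i\ (1\le i\le\ell+1).$$ Then the $( * )$-$(\mathcal{L},\mathcal{P})$-TGRS code $\mathcal{C}$ is an LCD code, i.e. $\mathcal{C}\cap\mathcal{C}^{\perp}=\{\boldsymbol0\}$.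
   Context: $P=\prod_{i=1}^n\alpha_i$. For an integer $t$, $S_t(x_1,\dots,x_n)$ is the complete homogeneous symmetric polynomial of degree $t$ ($S_t=0$ for $t<0$, $S_0=1$, and $S_t=\sum_{t_1+\dots+t_n=t,\,t_i\ge0}x_1^{t_1}\cdots x_n^{t_n}$ for $t\ge0$), and $\Omega_i=\sum_{t=0}^{\ell}\eta_tS_{t+1-i}(\alpha_1,\dots,\alpha_n)$. The $( * )$-$(\mathcal{L},\mathcal{P})$-TGRS code is $\mathcal{C}=\{(v_1f(\alpha_1),\dots,v_nf(\alpha_n)) : f\in\mathcal{F}_{n,k,\boldsymbol\eta}\}$, where $\mathcal{F}_{n,k,\boldsymbol\eta}=\{\sum_{i=0}^{k-1}f_ix^i+f_0\sum_{j=0}^{\ell}\eta_jx^{k+j} : f_i\in\mathbb{F}_q\}$. $\mathcal{C}^{\perp}$ is the dual with respect to the standard inner product $\sum_i x_iy_i$. *)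

theory Defs
  imports "HOL-Computational_Algebra.Polynomial" "HOL-Library.FuncSet"
begin

definition compl_hom :: "int \<Rightarrow> nat \<Rightarrow> (nat \<Rightarrow> 'a::comm_ring_1) \<Rightarrow> 'a" where
  "compl_hom t n x =
     (if t < 0 then 0
      else (\<Sum>e \<in> {e \<in> {1..n} \<rightarrow>\<^sub>E {0..nat t}. (\<Sum>i\<in>{1..n}. e i) = nat t}.
              \<Prod>i\<in>{1..n}. x i ^ e i))"

definition Omega :: "nat \<Rightarrow> nat \<Rightarrow> (nat \<Rightarrow> 'a::comm_ring_1) \<Rightarrow> (nat \<Rightarrow> 'a) \<Rightarrow> nat \<Rightarrow> 'a" where
  "Omega n l eta alpha i = (\<Sum>t\<in>{0..l}. eta t * compl_hom (int t + 1 - int i) n alpha)"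

definition Phi :: "nat \<Rightarrow> nat \<Rightarrow> (nat \<Rightarrow> 'a::comm_ring_1) \<Rightarrow> (nat \<Rightarrow> 'a) \<Rightarrow> nat \<Rightarrow> 'a" where
  "Phi n l eta alpha i = (-1) ^ (n - 1) * (\<Prod>j\<in>{1..n}. alpha j) * Omega n l eta alpha i"

definition tgrs_poly :: "nat \<Rightarrow> nat \<Rightarrow> (nat \<Rightarrow> 'a::comm_ring_1) \<Rightarrow> (nat \<Rightarrow> 'a) \<Rightarrow> 'a poly" where
  "tgrs_poly k l eta f =
     (\<Sum>i<k. monom (f i) i) + smult (f 0) (\<Sum>j\<in>{0..l}. monom (eta j) (k + j))"

text \<open>Codewords are vectors indexed by 1..n, represented as functions vanishing outside {1..n}.\<close>
definition tgrs_code :: "nat \<Rightarrow> nat \<Rightarrow> nat \<Rightarrow> (nat \<Rightarrow> 'a::comm_ring_1) \<Rightarrow> (nat \<Rightarrow> 'a) \<Rightarrow> (nat \<Rightarrow> 'a)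
     \<Rightarrow> (nat \<Rightarrow> 'a) set" where
  "tgrs_code n k l eta alpha v =
     {c. \<exists>f. c = (\<lambda>i. if i \<in> {1..n} then v i * poly (tgrs_poly k l eta f) (alpha i) else 0)}"

definition dual_code :: "nat \<Rightarrow> (nat \<Rightarrow> 'a::comm_ring_1) set \<Rightarrow> (nat \<Rightarrow> 'a) set" where
  "dual_code n C = {y. (\<forall>i. i \<notin> {1..n} \<longrightarrow> y i = 0) \<and> (\<forall>c\<in>C. (\<Sum>i\<in>{1..n}. c i * y i) = 0)}"

definition is_LCD :: "nat \<Rightarrow> (nat \<Rightarrow> 'a::comm_ring_1) set \<Rightarrow> bool" where
  "is_LCD n C \<longleftrightarrow> C \<inter> dual_code n C = {\<lambda>_. 0}"

end

theory Submission
  imports Defs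
begin


lemma geo_poly: "[:1, - x:] * (\<Sum>e\<in>{0..m}. monom (x ^ e) e) = 1 - monom (x ^ Suc m) (Suc m)"
  for x :: "'a::comm_ring_1"
proof (induction m)
  case 0
  then show ?case by (simp add: monom_Suc one_pCons monom_0)
next
  case (Suc m)
  have "[:1, - x:] * (\<Sum>e\<in>{0..Suc m}. monom (x ^ e) e) =
     [:1, - x:] * (\<Sum>e\<in>{0..m}. monom (x ^ e) e) + [:1, - x:] * monom (x ^ Suc m) (Suc m)"
    by (simp add: distrib_left)
  also have "[:1, - x:] * monom (x ^ Suc m) (Suc m) = monom (x ^ Suc m) (Suc m) - monom (x ^ Suc (Suc m)) (Suc (Suc m))"
    by (simp add: mult_pCons_left monom_Suc smult_monom minus_monom)
  finally show ?case unfolding Suc.IH by simp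
qed

lemma prod_monom_gen: "finite A \<Longrightarrow> (\<Prod>i\<in>A. monom (c i) (d i)) = monom (\<Prod>i\<in>A. c i) (\<Sum>i\<in>A. d i)"
  by (induction A rule: finite_induct) (auto simp: mult_monom)

lemma prod_one_minus_monom:
  fixes c :: "'b \<Rightarrow> 'a::comm_ring_1"
  assumes "finite A"
  shows "\<exists>R. (\<Prod>i\<in>A. 1 - monom (c i) M) = 1 + monom 1 M * R"
  using assms
proof (induction A rule: finite_induct)
  case empty
  then show ?case by (intro exI[of _ 0]) simp
next
  case (insert a A)
  then obtain R where R: "(\<Prod>i\<in>A. 1 - monom (c i) M) = 1 + monom 1 M * R" by blast
  have mc: "monom (c a) M = monom 1 M * [:c a:]" by (simp add: smult_monom)
  have "(\<Prod>i\<in>insert a A. 1 - monom (c i) M) = (1 - monom 1 M * [:c a:]) * (1 + monom 1 M * R)"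
    using insert R mc by simp
  also have "\<dots> = 1 + monom 1 M * (R - [:c a:] - [:c a:] * monom 1 M * R)"
    by (simp add: algebra_simps)
  finally show ?case by blast
qed

lemma reflect_lin: "reflect_poly [:b, 1:] = [:1, b:]"
  for b :: "'a::comm_ring_1"
  by (rule poly_eqI) (auto simp: coeff_reflect_poly coeff_pCons split: nat.splits)

lemma compl_hom_roots:
  fixes alpha :: "nat \<Rightarrow> 'a::field"
  assumes n_pos: "n > 0"
    and roots: "monom 1 n - [:lam:] = (\<Prod>i\<in>{1..n}. [:- alpha i, 1:])"
    and mn: "m < n"
  shows "compl_hom (int m) n alpha = (if m = 0 then 1 else 0)"
proof -
  define G where "G = (\<Prod>i\<in>{1..n}. \<Sum>e\<in>{0..m}. monom (alpha i ^ e) e)"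
  define E where "E = (\<Prod>i\<in>{1..n}. [:1, - alpha i:])"
  have "G = (\<Sum>g\<in>PiE {1..n} (\<lambda>_. {0..m}). \<Prod>i\<in>{1..n}. monom (alpha i ^ g i) (g i))"
    unfolding G_def by (rule prod_sum_PiE) auto
  also have "\<dots> = (\<Sum>g\<in>PiE {1..n} (\<lambda>_. {0..m}). monom (\<Prod>i\<in>{1..n}. alpha i ^ g i) (\<Sum>i\<in>{1..n}. g i))"
    by (simp add: prod_monom_gen)
  finally have G2: "G = \<dots>" .
  have fin: "finite (PiE {1..n} (\<lambda>_. {0..m}))" by (simp add: finite_PiE)
  have cG: "coeff G m = compl_hom (int m) n alpha"
    unfolding G2 compl_hom_def coeff_sum coeff_monom
    using fin by (simp add: sum.inter_filter[symmetric] if_distrib cong: if_cong)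
  have "E * G = (\<Prod>i\<in>{1..n}. [:1, - alpha i:] * (\<Sum>e\<in>{0..m}. monom (alpha i ^ e) e))"
    unfolding E_def G_def by (rule prod.distrib[symmetric])
  also have "\<dots> = (\<Prod>i\<in>{1..n}. 1 - monom (alpha i ^ Suc m) (Suc m))"
    by (simp only: geo_poly)
  finally have EG: "E * G = \<dots>" .
  obtain R where R: "(\<Prod>i\<in>{1..n}. 1 - monom (alpha i ^ Suc m) (Suc m)) = 1 + monom 1 (Suc m) * R"
    using prod_one_minus_monom[of "{1..n}" "\<lambda>i. alpha i ^ Suc m" "Suc m"] by auto
  have c1: "coeff (E * G) m = (if m = 0 then 1 else 0)"
    unfolding EG R by (simp add: coeff_monom_mult)
  have "E = reflect_poly (\<Prod>i\<in>{1..n}. [:- alpha i, 1:])"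
    unfolding E_def reflect_poly_prod by (simp add: reflect_lin)
  hence E2: "E = reflect_poly (monom 1 n - [:lam:])" using roots by simp
  have dg: "degree (monom 1 n - [:lam:]) = n"
    using n_pos by (subst diff_conv_add_uminus, subst degree_add_eq_left) (simp_all add: degree_monom_eq)
  have cE: "coeff E j = (if j = 0 then 1 else 0)" if "j \<le> m" for j
    using that mn n_pos unfolding E2 by (auto simp add: coeff_reflect_poly dg coeff_monom coeff_pCons split: nat.splits)
  have "coeff (E * G) m = (\<Sum>j\<le>m. coeff E j * coeff G (m - j))" by (rule coeff_mult)
  also have "\<dots> = (\<Sum>j\<le>m. (if j = 0 then coeff G m else 0))"
    by (rule sum.cong) (auto simp: cE)
  also have "\<dots> = coeff G m" by simp
  finally show ?thesis using c1 cG by simp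
qed

lemma compl_hom_roots_int:
  fixes alpha :: "nat \<Rightarrow> 'a::field"
  assumes "n > 0" "monom 1 n - [:lam:] = (\<Prod>i\<in>{1..n}. [:- alpha i, 1:])" "d < int n"
  shows "compl_hom d n alpha = (if d = 0 then 1 else 0)"
proof (cases "d < 0")
  case True
  then show ?thesis by (simp add: compl_hom_def)
next
  case False
  then obtain m where m: "d = int m" by (metis nonneg_int_cases not_less)
  show ?thesis using compl_hom_roots[OF assms(1,2), of m] m assms(3) by simp
qed

lemma poly_tgrs: "poly (tgrs_poly k l eta f) x = (\<Sum>i<k. f i * x ^ i) + f 0 * (\<Sum>j\<in>{0..l}. eta j * x ^ (k + j))"
  by (simp add: tgrs_poly_def poly_sum poly_monom)

lemma coeff_tgrs: "coeff (tgrs_poly k l eta f) m =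
   (if m < k then f m else 0) + f 0 * (if k \<le> m \<and> m \<le> k + l then eta (m - k) else 0)"
proof -
  have 1: "(\<Sum>i<k. coeff (monom (f i) i) m) = (if m < k then f m else 0)"
    by (simp add: coeff_monom)
  have "(\<Sum>j\<in>{0..l}. coeff (monom (eta j) (k + j)) m) = (\<Sum>j\<in>{0..l}. if j = m - k \<and> k \<le> m then eta j else 0)"
    by (rule sum.cong) (auto simp: coeff_monom)
  also have "\<dots> = (if k \<le> m \<and> m \<le> k + l then eta (m - k) else 0)"
    by (auto simp: sum.delta)
  finally show ?thesis unfolding tgrs_poly_def coeff_add coeff_smult coeff_sum 1 by simp
qed

lemma degree_tgrs: "degree (tgrs_poly k l eta f) \<le> k + l"
  by (rule degree_le) (auto simp: coeff_tgrs)



lemma root_facts: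
  fixes alpha :: "nat \<Rightarrow> 'a::field"
  assumes n_pos: "n > 0" and lam_nz: "lam \<noteq> 0"
    and alpha_inj: "inj_on alpha {1..n}"
    and roots: "monom 1 n - [:lam:] = (\<Prod>i\<in>{1..n}. [:- alpha i, 1:])"
  shows "\<forall>i\<in>{1..n}. alpha i ^ n = lam"
    and "\<forall>i\<in>{1..n}. alpha i \<noteq> 0"
    and "(of_nat n :: 'a) \<noteq> 0"
    and "(-1) ^ (n - 1) * (\<Prod>j\<in>{1..n}. alpha j) = lam"
proof -
  show an: "\<forall>i\<in>{1..n}. alpha i ^ n = lam"
  proof
    fix i assume i: "i \<in> {1..n}"
    have "poly (monom 1 n - [:lam:]) (alpha i) = (\<Prod>j\<in>{1..n}. poly [:- alpha j, 1:] (alpha i))"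
      unfolding roots poly_prod ..
    also have "\<dots> = 0" using i by (intro prod_zero) auto
    finally show "alpha i ^ n = lam" by (simp add: poly_monom)
  qed
  then show "\<forall>i\<in>{1..n}. alpha i \<noteq> 0" using lam_nz n_pos by (metis power_0_left not_gr0)
  have "pderiv (monom 1 n - [:lam:]) = monom (of_nat n) (n - 1)"
    by (simp add: pderiv_diff pderiv_monom)
  moreover have "pderiv (\<Prod>i\<in>{1..n}. [:- alpha i, 1:]) = (\<Sum>a\<in>{1..n}. \<Prod>j\<in>{1..n} - {a}. [:- alpha j, 1:])"
    by (simp add: pderiv_prod pderiv_pCons)
  ultimately have "monom (of_nat n) (n - 1) = (\<Sum>a\<in>{1..n}. \<Prod>j\<in>{1..n} - {a}. [:- alpha j, 1:])"
    using roots by simp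
  hence "poly (monom (of_nat n) (n - 1)) (alpha 1) = (\<Sum>a\<in>{1..n}. \<Prod>j\<in>{1..n} - {a}. poly [:- alpha j, 1:] (alpha 1))"
    by (simp add: poly_sum poly_prod)
  also have "\<dots> = (\<Sum>a\<in>{1..n}. if a = 1 then (\<Prod>j\<in>{1..n} - {1}. poly [:- alpha j, 1:] (alpha 1)) else 0)"
    using n_pos by (intro sum.cong refl) (auto intro!: prod_zero)
  also have "\<dots> = (\<Prod>j\<in>{1..n} - {1}. alpha 1 - alpha j)"
    using n_pos by (simp add: sum.delta)
  also have "\<dots> \<noteq> 0"
  proof -
    have nz: "alpha 1 - alpha j \<noteq> 0" if j: "j \<in> {1..n} - {1}" for j
    proof
      assume "alpha 1 - alpha j = 0"
      hence "1 = j" using inj_onD[OF alpha_inj, of 1 j] n_pos j by auto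
      with j show False by simp
    qed
    show ?thesis using nz by (subst prod_zero_iff) auto
  qed
  finally show "(of_nat n :: 'a) \<noteq> 0" by (auto simp: poly_monom)
  have "poly (monom 1 n - [:lam:]) 0 = (\<Prod>j\<in>{1..n}. poly [:- alpha j, 1:] 0)"
    unfolding roots poly_prod ..
  hence "- lam = (\<Prod>j\<in>{1..n}. (-1) * alpha j)" using n_pos by (simp add: poly_monom power_0_left)
  also have "\<dots> = (-1) ^ n * (\<Prod>j\<in>{1..n}. alpha j)" unfolding prod.distrib by simp
  finally have "- lam = (-1) ^ n * (\<Prod>j\<in>{1..n}. alpha j)" .
  moreover obtain n' where "n = Suc n'" using n_pos by (cases n) auto
  ultimately show "(-1) ^ (n - 1) * (\<Prod>j\<in>{1..n}. alpha j) = lam"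
    by (simp add: minus_equation_iff)
qed

lemma geo_roots:
  fixes alpha :: "nat \<Rightarrow> 'a::field"
  assumes an: "\<forall>i\<in>{1..n}. alpha i ^ n = lam" and anz: "\<forall>i\<in>{1..n}. alpha i \<noteq> 0"
    and alpha_inj: "inj_on alpha {1..n}"
    and i: "i \<in> {1..n}" and j: "j \<in> {1..n}"
  shows "(\<Sum>m<n. (alpha j * inverse (alpha i)) ^ m) = (if i = j then of_nat n else 0)"
proof (cases "i = j")
  case True
  then show ?thesis using anz i by simp
next
  case False
  let ?z = "alpha j * inverse (alpha i)"
  have "?z \<noteq> 1"
  proof
    assume "?z = 1"
    hence "alpha j = alpha i" using anz i by (simp add: field_simps)
    with alpha_inj i j False show False by (auto dest: inj_onD)
  qed
  have "lam \<noteq> 0" using an anz i by (metis power_not_zero)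
  moreover have "?z ^ n = 1" using an anz i j `lam \<noteq> 0` by (simp add: power_mult_distrib power_inverse)
  ultimately show ?thesis using False `?z \<noteq> 1` by (simp add: geometric_sum)
qed



theorem theorem4p2:
  fixes lam :: "'a::{finite,field}"
    and alpha eta v :: "nat \<Rightarrow> 'a"
    and n l r k :: nat
  assumes q_odd: "odd (card (UNIV::'a set))"
    and n_pos: "n > 0"
    and n_dvd: "n dvd (card (UNIV::'a set) - 1)"
    and lam_nz: "lam \<noteq> 0"
    and lam_ord: "lam ^ ((card (UNIV::'a set) - 1) div n) = 1"
    and alpha_inj: "inj_on alpha {1..n}"
    and alpha_roots: "monom 1 n - [:lam:] = (\<Prod>i\<in>{1..n}. [:- alpha i, 1:])"
    and eta_nz: "\<exists>t\<in>{0..l}. eta t \<noteq> 0"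
    and r_le: "r \<le> l"
    and k_def: "n = l + r + 2 * k"
    and k_ge: "k \<ge> 2"
    and v_pm: "\<forall>i\<in>{k..n}. v i = 1 \<or> v i = -1"
    and v_other: "\<forall>i\<in>{1..k-1}. v i \<notin> {-1, 0, 1}"
    and cond: "1 + (\<Sum>t\<in>{r..l}. eta t * Phi n l eta alpha (l + 1 + r - t)) \<noteq> 0"
  shows "is_LCD n (tgrs_code n k l eta alpha v)"
proof -
  note rf = root_facts[OF n_pos lam_nz alpha_inj alpha_roots]
  have an: "\<forall>i\<in>{1..n}. alpha i ^ n = lam" and anz: "\<forall>i\<in>{1..n}. alpha i \<noteq> 0"
    and nnz: "(of_nat n :: 'a) \<noteq> 0" and Pl: "(-1) ^ (n - 1) * (\<Prod>j\<in>{1..n}. alpha j) = lam"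
    using rf by auto
  have kpos: "k > 0" using k_ge by simp
  have Om: "Omega n l eta alpha (l + 1 + r - t) = eta (l + r - t)" if t: "t \<in> {r..l}" for t
  proof -
    have "Omega n l eta alpha (l + 1 + r - t) =
        (\<Sum>t'\<in>{0..l}. if t' = l + r - t then eta t' else 0)"
      unfolding Omega_def
    proof (rule sum.cong[OF refl])
      fix t' assume t': "t' \<in> {0..l}"
      have "int t' + 1 - int (l + 1 + r - t) < int n" using t t' k_def kpos by auto
      moreover have "(int t' + 1 - int (l + 1 + r - t) = 0) = (t' = l + r - t)" using t by auto
      ultimately show "eta t' * compl_hom (int t' + 1 - int (l + 1 + r - t)) n alpha =
          (if t' = l + r - t then eta t' else 0)"
        using compl_hom_roots_int[OF n_pos alpha_roots] by simp
    qed
    also have "\<dots> = eta (l + r - t)" using t by (auto simp add: sum.delta)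
    finally show ?thesis .
  qed
  define X where "X = (\<Sum>t\<in>{r..l}. eta t * eta (l + r - t))"
  have condX: "1 + lam * X \<noteq> 0"
  proof -
    have "(\<Sum>t\<in>{r..l}. eta t * Phi n l eta alpha (l + 1 + r - t)) = (\<Sum>t\<in>{r..l}. lam * (eta t * eta (l + r - t)))"
    proof (rule sum.cong[OF refl])
      fix t assume t: "t \<in> {r..l}"
      show "eta t * Phi n l eta alpha (l + 1 + r - t) = lam * (eta t * eta (l + r - t))"
        unfolding Phi_def Om[OF t] Pl by simp
    qed
    then show ?thesis using cond by (simp add: X_def sum_distrib_left)
  qed
  show ?thesis
    unfolding is_LCD_def
  proof (rule equalityI)
    show "{\<lambda>_. 0} \<subseteq> tgrs_code n k l eta alpha v \<inter> dual_code n (tgrs_code n k l eta alpha v)"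
    proof -
      have "tgrs_poly k l eta (\<lambda>_. 0) = 0" by (simp add: tgrs_poly_def)
      hence "(\<lambda>_. 0) = (\<lambda>i. if i \<in> {1..n} then v i * poly (tgrs_poly k l eta (\<lambda>_. 0)) (alpha i) else 0)"
        by (intro ext) simp
      hence "(\<lambda>_. 0) \<in> tgrs_code n k l eta alpha v" unfolding tgrs_code_def by blast
      moreover have "(\<lambda>_. 0) \<in> dual_code n (tgrs_code n k l eta alpha v)" by (simp add: dual_code_def)
      ultimately show ?thesis by blast
    qed
  next
    show "tgrs_code n k l eta alpha v \<inter> dual_code n (tgrs_code n k l eta alpha v) \<subseteq> {\<lambda>_. 0}"
    proof
      fix c assume cC: "c \<in> tgrs_code n k l eta alpha v \<inter> dual_code n (tgrs_code n k l eta alpha v)"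
      then obtain f where c: "c = (\<lambda>i. if i \<in> {1..n} then v i * poly (tgrs_poly k l eta f) (alpha i) else 0)"
        unfolding tgrs_code_def by blast
      define fp where "fp = tgrs_poly k l eta f"
      define a where "a i = v i * v i * poly fp (alpha i)" for i
      have orth: "(\<Sum>i\<in>{1..n}. a i * poly (tgrs_poly k l eta g) (alpha i)) = 0" for g
      proof -
        let ?c' = "\<lambda>i. if i \<in> {1..n} then v i * poly (tgrs_poly k l eta g) (alpha i) else 0"
        have "?c' \<in> tgrs_code n k l eta alpha v" unfolding tgrs_code_def by blast
        moreover have "\<forall>c'\<in>tgrs_code n k l eta alpha v. (\<Sum>i\<in>{1..n}. c' i * c i) = 0"
          using cC unfolding dual_code_def by blast
        ultimately have "(\<Sum>i\<in>{1..n}. ?c' i * c i) = 0" by (rule bspec[rotated])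
        moreover have "(\<Sum>i\<in>{1..n}. ?c' i * c i) = (\<Sum>i\<in>{1..n}. a i * poly (tgrs_poly k l eta g) (alpha i))"
          by (rule sum.cong[OF refl]) (simp add: c a_def fp_def mult_ac)
        ultimately show ?thesis by simp
      qed
      have O1: "(\<Sum>i\<in>{1..n}. a i * alpha i ^ j) = 0" if j: "j \<in> {1..k-1}" for j
      proof -
        have "poly (tgrs_poly k l eta (\<lambda>i. if i = j then 1 else 0)) x = x ^ j" for x
        proof -
          have "(\<Sum>i<k. (if i = j then 1 else 0) * x ^ i) = (\<Sum>i<k. if i = j then x ^ j else 0)"
            by (rule sum.cong) auto
          also have "\<dots> = x ^ j" using j kpos by auto
          finally show ?thesis using j by (simp add: poly_tgrs)
        qed
        thus ?thesis using orth[of "\<lambda>i. if i = j then 1 else 0"] by simp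
      qed
      have O2: "(\<Sum>i\<in>{1..n}. a i * (1 + (\<Sum>j\<in>{0..l}. eta j * alpha i ^ (k + j)))) = 0"
      proof -
        have "poly (tgrs_poly k l eta (\<lambda>i. if i = 0 then 1 else 0)) x = 1 + (\<Sum>j\<in>{0..l}. eta j * x ^ (k + j))" for x
        proof -
          have "(\<Sum>i<k. (if i = 0 then 1 else 0) * x ^ i) = (\<Sum>i<k. if i = 0 then 1 else 0)"
            by (rule sum.cong) auto
          also have "\<dots> = 1" using kpos by simp
          finally show ?thesis by (simp add: poly_tgrs)
        qed
        thus ?thesis using orth[of "\<lambda>i. if i = 0 then 1 else 0"] by simp
      qed
      define h where "h m = (\<Sum>i\<in>{1..n}. a i * inverse (alpha i) ^ m) / of_nat n" for m
      define H where "H = (\<Sum>m<n. monom (h m) m)"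
      have coeffH: "coeff H m = (if m < n then h m else 0)" for m
        by (simp add: H_def coeff_sum coeff_monom)
      have polyH: "poly H x = (\<Sum>m<n. h m * x ^ m)" for x
        by (simp add: H_def poly_sum poly_monom)
      have Ha: "poly H (alpha j) = a j" if j: "j \<in> {1..n}" for j
      proof -
        have "poly H (alpha j) = (\<Sum>m<n. \<Sum>i\<in>{1..n}. a i * (alpha j * inverse (alpha i)) ^ m) / of_nat n"
          unfolding polyH h_def
          by (simp add: sum_divide_distrib sum_distrib_right sum_distrib_left power_mult_distrib mult_ac)
        also have "\<dots> = (\<Sum>i\<in>{1..n}. a i * (\<Sum>m<n. (alpha j * inverse (alpha i)) ^ m)) / of_nat n"
          by (simp add: sum_distrib_left sum.swap[of _ "{..<n}"])
        also have "\<dots> = (\<Sum>i\<in>{1..n}. if i = j then a j * of_nat n else 0) / of_nat n"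
          by (intro arg_cong2[where f="(/)"] sum.cong refl)
             (use geo_roots[OF an anz alpha_inj _ j] in auto)
        also have "\<dots> = a j" using j nnz by (simp add: sum.delta)
        finally show ?thesis .
      qed
      have inv_pow: "inverse (alpha i) ^ m = alpha i ^ (n - m) / lam" if i: "i \<in> {1..n}" and m: "m \<le> n" for i m
      proof -
        have "alpha i ^ (n - m) * alpha i ^ m = lam" using an i m by (simp add: power_add[symmetric])
        thus ?thesis using anz i lam_nz by (auto simp: field_simps power_inverse)
      qed
      have h_shift: "h m = (\<Sum>i\<in>{1..n}. a i * alpha i ^ (n - m)) / lam / of_nat n" if m: "m \<le> n" for m
        unfolding h_def by (simp add: inv_pow m sum_divide_distrib)
      have h_hi: "h m = 0" if m1: "n - k < m" and m2: "m < n" for m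
      proof -
        have "n - m \<in> {1..k-1}" using m1 m2 k_def by auto
        thus ?thesis using h_shift[of m] m2 O1[of "n - m"] by simp
      qed
      have h_O2: "h 0 + lam * (\<Sum>j\<in>{0..l}. eta j * h (n - k - j)) = 0"
      proof -
        define s where "s j = (\<Sum>i\<in>{1..n}. a i * alpha i ^ (k + j))" for j
        have hs: "h (n - k - j) = s j / lam / of_nat n" if "j \<in> {0..l}" for j
        proof -
          have "n - (n - k - j) = k + j" using that k_def by auto
          thus ?thesis using h_shift[of "n - k - j"] by (simp add: s_def)
        qed
        have h0: "h 0 = (\<Sum>i\<in>{1..n}. a i) / of_nat n" by (simp add: h_def)
        have "(\<Sum>i\<in>{1..n}. a i) + (\<Sum>j\<in>{0..l}. eta j * s j) = 0"
          using O2 by (simp add: s_def distrib_left sum.distrib sum_distrib_left sum.swap[of _ "{0..l}"] mult_ac)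
        moreover have "lam * (\<Sum>j\<in>{0..l}. eta j * h (n - k - j)) = (\<Sum>j\<in>{0..l}. eta j * s j) / of_nat n"
          unfolding sum_distrib_left sum_divide_distrib
          by (rule sum.cong[OF refl]) (use lam_nz hs in simp)
        ultimately show ?thesis unfolding h0 by (simp add: add_divide_distrib[symmetric])
      qed
      have degH: "degree H \<le> n - k"
        by (rule degree_le) (auto simp: coeffH h_hi)
      have fpH: "fp = H"
      proof (rule poly_eqI_degree[of "alpha ` {k..n}"])
        fix x assume "x \<in> alpha ` {k..n}"
        then obtain i where i: "i \<in> {k..n}" and x: "x = alpha i" by blast
        have i1: "i \<in> {1..n}" using i kpos by auto
        have "v i = 1 \<or> v i = -1" using v_pm i by blast
        hence "v i * v i = 1" by auto
        thus "poly fp x = poly H x" using Ha[OF i1] x by (simp add: a_def)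
      next
        have "card (alpha ` {k..n}) = n - k + 1"
          using inj_on_subset[OF alpha_inj, of "{k..n}"] kpos k_def
          by (subst card_image) auto
        moreover have "degree fp \<le> k + l" unfolding fp_def by (rule degree_tgrs)
        ultimately show "degree fp < card (alpha ` {k..n})" "degree H < card (alpha ` {k..n})"
          using degH k_def by auto
      qed
      have f0: "f 0 = 0"
      proof -
        have "h 0 = coeff fp 0" using coeffH[of 0] fpH n_pos by simp
        also have "\<dots> = f 0" using kpos by (simp add: fp_def coeff_tgrs)
        finally have "h 0 = f 0" .
        have hj: "eta j * h (n - k - j) = f 0 * (if r \<le> j then eta j * eta (l + r - j) else 0)"
          if j: "j \<in> {0..l}" for j
        proof -
          have "h (n - k - j) = coeff fp (n - k - j)" using coeffH[of "n - k - j"] fpH k_def kpos by simp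
          also have "\<dots> = f 0 * (if r \<le> j then eta (l + r - j) else 0)"
            unfolding fp_def coeff_tgrs using j k_def
            by (auto simp: algebra_simps)
          finally show ?thesis by simp
        qed
        have "(\<Sum>j\<in>{0..l}. eta j * h (n - k - j)) = f 0 * (\<Sum>j\<in>{0..l}. if r \<le> j then eta j * eta (l + r - j) else 0)"
          unfolding sum_distrib_left by (rule sum.cong[OF refl]) (rule hj)
        also have "(\<Sum>j\<in>{0..l}. if r \<le> j then eta j * eta (l + r - j) else 0) = X"
          unfolding X_def by (subst sum.inter_filter[symmetric]) (auto intro!: sum.cong)
        finally have "f 0 * (1 + lam * X) = 0" using h_O2 `h 0 = f 0` by (simp add: algebra_simps)
        thus ?thesis using condX by simp
      qed
      have fp_roots: "poly fp (alpha i) = 0" if i: "i \<in> {1..k-1}" for i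
      proof -
        have i1: "i \<in> {1..n}" using i k_def by auto
        have "a i = poly fp (alpha i)" using Ha[OF i1] fpH by simp
        hence "(v i * v i - 1) * poly fp (alpha i) = 0" by (simp add: a_def algebra_simps)
        moreover have "v i * v i - 1 \<noteq> 0"
        proof
          assume "v i * v i - 1 = 0"
          hence "(v i - 1) * (v i + 1) = 0" by (simp add: algebra_simps)
          hence "v i = 1 \<or> v i = -1" by (auto simp: eq_neg_iff_add_eq_0)
          thus False using v_other i by auto
        qed
        ultimately show ?thesis by simp
      qed
      have fp0: "fp = 0"
      proof (rule poly_eqI_degree[of "insert 0 (alpha ` {1..k-1})"])
        fix x assume "x \<in> insert 0 (alpha ` {1..k-1})"
        moreover have "poly fp 0 = 0" using f0 kpos by (simp add: poly_0_coeff_0 fp_def coeff_tgrs)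
        ultimately show "poly fp x = poly 0 x" using fp_roots by auto
      next
        have "0 \<notin> alpha ` {1..k-1}" using anz k_def by auto
        moreover have "card (alpha ` {1..k-1}) = k - 1"
        proof -
          have "{1..k-1} \<subseteq> {1..n}" using k_def by auto
          hence "inj_on alpha {1..k-1}" using inj_on_subset[OF alpha_inj] by blast
          thus ?thesis by (subst card_image) auto
        qed
        ultimately have cA: "card (insert 0 (alpha ` {1..k-1})) = k" using kpos by simp
        have "degree fp \<le> k - 1" unfolding fp_def
          by (rule degree_le) (auto simp: coeff_tgrs f0)
        thus "degree fp < card (insert 0 (alpha ` {1..k-1}))" "degree (0::'a poly) < card (insert 0 (alpha ` {1..k-1}))"
          using cA kpos by auto
      qed
      show "c \<in> {\<lambda>_. 0}" using c fp0 fp_def by auto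
    qed
  qed
qed

end
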